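(* Let $T$ be a string, let $1\le j\le |T|$, $1\le i\le j+1$, let $w$ be a string, and let $L=T[1..i-1]$, $R=T[j+1..|T|]$ and $T'=LwR$, with $|L|\ge |R|$ and $|w|\le |L|/2$. Suppose $T'$ is periodic and write $T'=(uv)^k u$ with $k\ge 2$ an integer and strings $u,v$ with $|uv|=\mathsf{per}(T')$. Suppose further that $|uvu|>|Lw|$, and let $x=\mathsf{cov}(\mathsf{bord}(uvu))$. Then $x$ covers $uvu$ if and only if $\mathsf{range}(Lw,|x|)\ge |uvu|-\max\{|u|,|x|\}$.
   Context: $S[i..j]$ denotes the factor of $S$ from position $i$ to $j$ (empty if $i>j$). A border of a nonempty string $S$ is a string that is both a proper prefix and a proper suffix of $S$; $\mathsf{bord}(S)$ is the longest border. If $S$ has a border $b$ then $|S|-|b|$ is a period of $S$; $\mathsf{per}(S)$ is the smallest period, and $S$ is periodic if $\mathsf{per}(S)\le |S|/2$. A string $f$ covers $S$ (is a cover of $S$) if every position of $S$ lies inside some occurrence of $f$ in $S$; $\mathsf{cov}(S)$ is the shortest cover of $S$. For $1\le k\le |S|$, $\mathsf{range}(S,k)$ is the largest $r$ such that $S[1..k]$ covers $S[1..r]$. *)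

theory Defs
  imports Main "HOL-Library.Sublist"
begin

(* Strings are lists; positions are 0-based internally. S[1..i-1] = take (i-1) S,
   S[j+1..|S|] = drop j S. *)

definition is_border :: "'a list \<Rightarrow> 'a list \<Rightarrow> bool" where
  "is_border b S \<longleftrightarrow> length b < length S \<and> prefix b S \<and> suffix b S"

(* longest border (meaningful for nonempty S) *)
definition bord :: "'a list \<Rightarrow> 'a list" where
  "bord S = take (GREATEST l. is_border (take l S) S) S"

definition is_period :: "nat \<Rightarrow> 'a list \<Rightarrow> bool" where
  "is_period p S \<longleftrightarrow> 0 < p \<and> p \<le> length S \<and>
     (\<forall>i. i + p < length S \<longrightarrow> S ! i = S ! (i + p))"

definition per :: "'a list \<Rightarrow> nat" where
  "per S = (LEAST p. is_period p S)"

definition periodic :: "'a list \<Rightarrow> bool" where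
  "periodic S \<longleftrightarrow> S \<noteq> [] \<and> 2 * per S \<le> length S"

definition occ_at :: "'a list \<Rightarrow> 'a list \<Rightarrow> nat \<Rightarrow> bool" where
  "occ_at f S p \<longleftrightarrow> p + length f \<le> length S \<and> take (length f) (drop p S) = f"

definition covers :: "'a list \<Rightarrow> 'a list \<Rightarrow> bool" where
  "covers f S \<longleftrightarrow> (\<forall>q < length S. \<exists>p. p \<le> q \<and> q < p + length f \<and> occ_at f S p)"

(* shortest cover (every cover of S is a prefix of S) *)
definition cov :: "'a list \<Rightarrow> 'a list" where
  "cov S = take (LEAST l. covers (take l S) S) S"

definition range_cov :: "'a list \<Rightarrow> nat \<Rightarrow> nat" where
  "range_cov S k = (GREATEST r. r \<le> length S \<and> covers (take k S) (take r S))"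

end

theory Submission imports Defs begin

lemma occ_at_nth: "occ_at f S p \<longleftrightarrow> p + length f \<le> length S \<and> (\<forall>i<length f. S!(p+i) = f!i)"
proof
  assume h: "occ_at f S p"
  then have l: "p + length f \<le> length S" and e: "take (length f) (drop p S) = f" by (auto simp: occ_at_def)
  have "\<forall>i<length f. S!(p+i) = f!i"
  proof (intro allI impI)
    fix i assume "i < length f"
    then have "take (length f) (drop p S) ! i = S ! (p+i)" using l by simp
    then show "S!(p+i) = f!i" using e by simp
  qed
  then show "p + length f \<le> length S \<and> (\<forall>i<length f. S!(p+i) = f!i)" using l by simp
next
  assume h: "p + length f \<le> length S \<and> (\<forall>i<length f. S!(p+i) = f!i)"
  have "take (length f) (drop p S) = f"
    by (rule nth_equalityI) (use h in auto)
  then show "occ_at f S p" using h by (simp add: occ_at_def)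
qed

lemma covers_trans:
  assumes "covers z x" "covers x S" shows "covers z S"
  unfolding covers_def
proof (intro allI impI)
  fix q assume q: "q < length S"
  obtain p where p: "p \<le> q" "q < p + length x" "occ_at x S p" using assms(2) q unfolding covers_def by blast
  have qp: "q - p < length x" using p by simp
  obtain p' where p': "p' \<le> q - p" "q - p < p' + length z" "occ_at z x p'"
    using assms(1) qp unfolding covers_def by blast
  have "occ_at z S (p + p')"
    using p(3) p'(3) unfolding occ_at_nth by (auto simp: add.assoc)
  then show "\<exists>pa\<le>q. q < pa + length z \<and> occ_at z S pa" using p p' by (intro exI[of _ "p+p'"]) auto
qed

lemma period_cover:
  assumes "0 < d" "2 * d \<le> length x" "\<forall>i. i + d < length x \<longrightarrow> x!i = x!(i+d)"
  shows "covers (take (length x - d) x) x"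
  unfolding covers_def
proof (intro allI impI)
  fix q assume q: "q < length x"
  have o0: "occ_at (take (length x - d) x) x 0" unfolding occ_at_nth by simp
  have o1: "occ_at (take (length x - d) x) x d" unfolding occ_at_nth using assms
    by (auto simp: add.commute)
  show "\<exists>p\<le>q. q < p + length (take (length x - d) x) \<and> occ_at (take (length x - d) x) x p"
  proof (cases "q < length x - d")
    case True then show ?thesis using o0 by (intro exI[of _ 0]) auto
  next
    case False then show ?thesis using o1 q assms by (intro exI[of _ d]) auto
  qed
qed

lemma occ_take: "occ_at f (take r S) s \<Longrightarrow> occ_at f S s"
  unfolding occ_at_nth by auto

lemma occ_shift:
  assumes "occ_at f b s" "ofs + length b \<le> length S" "\<forall>i<length b. S!(ofs+i) = b!i"
  shows "occ_at f S (ofs+s)"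
  using assms unfolding occ_at_nth by (auto simp: add.assoc)

lemma cover_prefix:
  assumes "covers x S" "occ_at x S s" "e = s + length x"
  shows "covers x (take e S)"
  unfolding covers_def
proof (intro allI impI)
  fix q assume q: "q < length (take e S)"
  have eS: "e \<le> length S" using assms(2,3) unfolding occ_at_nth by simp
  have os: "occ_at x (take e S) s" using assms(2,3) eS unfolding occ_at_nth by auto
  show "\<exists>p\<le>q. q < p + length x \<and> occ_at x (take e S) p"
  proof (cases "s \<le> q")
    case True then show ?thesis using os q assms(3) by auto
  next
    case False
    obtain p where p: "p \<le> q" "q < p + length x" "occ_at x S p" using assms(1) q unfolding covers_def by auto
    have "p + length x \<le> e" using False p assms(3) by simp
    then have "occ_at x (take e S) p" using p(3) eS unfolding occ_at_nth by auto
    then show ?thesis using p by auto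
  qed
qed

lemma per_ext:
  assumes "\<forall>i. i + p < length X \<longrightarrow> X!i = X!(i+p)" "0 < p" "0 < q" "p + q \<le> m" "m \<le> length X"
    "\<forall>i. i + q < m \<longrightarrow> X!i = X!(i+q)"
  shows "i + q < length X \<longrightarrow> X!i = X!(i+q)"
proof (induction i rule: less_induct)
  case (less i)
  show ?case
  proof
    assume h: "i + q < length X"
    show "X!i = X!(i+q)"
    proof (cases "i + q < m")
      case True then show ?thesis using assms(6) by auto
    next
      case False
      then have ip: "p \<le> i" using assms(4) by simp
      have a: "X!(i-p) = X!i" using assms(1)[rule_format, of "i-p"] ip h by simp
      have b: "X!(i-p+q) = X!(i+q)" using assms(1)[rule_format, of "i-p+q"] ip h by simp
      have "X!(i-p) = X!(i-p+q)" using less.IH[of "i-p"] ip h assms(2) by simp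
      then show ?thesis using a b by simp
    qed
  qed
qed

lemma bord_props:
  assumes "S \<noteq> []"
  obtains B where "bord S = take B S" "is_border (take B S) S" "B < length S"
    "\<And>l. is_border (take l S) S \<Longrightarrow> l \<le> B"
proof -
  define Q where "Q = (\<lambda>l. is_border (take l S) S)"
  have bnd: "\<And>y. Q y \<Longrightarrow> y \<le> length S"
    unfolding Q_def is_border_def by (cases "length S \<le> y") auto
  have w: "Q 0" using assms unfolding Q_def is_border_def by simp
  have g: "Q (Greatest Q)"
    by (rule GreatestI_nat[of Q 0 "length S"]) (use w bnd in auto)
  have le: "\<And>l. Q l \<Longrightarrow> l \<le> Greatest Q"
    by (rule Greatest_le_nat[of Q _ "length S"]) (use bnd in auto)
  have lt: "Greatest Q < length S"
    using g unfolding Q_def is_border_def by (cases "length S \<le> Greatest Q") auto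
  have "bord S = take (Greatest Q) S" unfolding bord_def Q_def by simp
  then show ?thesis using that g le lt unfolding Q_def by blast
qed

lemma border_nth:
  assumes "is_border (take l S) S" "i < l"
  shows "S!i = S!(i + (length S - l))"
proof -
  have lS: "l < length S" using assms(1) unfolding is_border_def by (cases "length S \<le> l") auto
  have "suffix (take l S) S" using assms(1) unfolding is_border_def by blast
  then obtain zs where zs: "S = zs @ take l S" unfolding suffix_def by blast
  have lz: "length zs = length S - l" using arg_cong[OF zs, of length] lS by simp
  have "S!(i + (length S - l)) = (zs @ take l S) ! (length zs + i)" using zs lz by (simp add: add.commute)
  also have "\<dots> = take l S ! i" by (simp add: nth_append)
  also have "\<dots> = S!i" using assms(2) by simp
  finally show ?thesis by simp
qed


lemma core:
  fixes S u v P :: "'a list"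
  assumes S: "S = u @ v @ u" and Bp: "length (bord S) \<le> length (u@v)"
  and P: "P = take n S" and n1: "length (u@v) < n" and n2: "n < length S"
  and n3: "2*length (u@v) + length u \<le> 2*n"
  shows "covers (cov (bord S)) S \<longleftrightarrow>
     range_cov P (length (cov (bord S))) \<ge> length S - max (length u) (length (cov (bord S)))"
proof -
  define p where "p = length (u@v)"
  define m where "m = length S"
  have mp: "m = p + length u" unfolding m_def p_def S by simp
  have u1: "1 \<le> length u" using n1 n2 n3 unfolding m_def[symmetric] p_def[symmetric] mp by linarith
  have Sne: "S \<noteq> []" using u1 S by auto
  obtain B where bB: "bord S = take B S" and Bb: "is_border (take B S) S" and Bm: "B < length S"
    and Bmax: "\<And>l. is_border (take l S) S \<Longrightarrow> l \<le> B"
    using bord_props[OF Sne] by blast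
  define b where "b = take B S"
  have lb: "length b = B" using Bm unfolding b_def by simp
  have uB: "length u \<le> B"
  proof -
    have "take (length u) S = u" using S by simp
    then have "is_border (take (length u) S) S" using S u1 unfolding is_border_def
      by (auto simp: suffix_def)
    then show ?thesis by (rule Bmax)
  qed
  have Bp': "B \<le> p" using Bp bB lb b_def p_def by simp
  have bS: "\<forall>i<B. S!(m - B + i) = b!i"
    using border_nth[OF Bb] Bm unfolding b_def m_def by (simp add: add.commute)
  define Q where "Q = (\<lambda>l. covers (take l b) b)"
  have QB: "Q B"
  proof -
    have "occ_at b b 0" unfolding occ_at_nth by simp
    then show ?thesis unfolding Q_def covers_def using lb by (auto intro!: exI[of _ 0])
  qed
  define c where "c = Least Q"
  have Qc: "Q c" unfolding c_def by (rule LeastI[of Q B]) (rule QB)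
  have cB: "c \<le> B" unfolding c_def by (rule Least_le) (rule QB)
  have cmin: "\<And>l. Q l \<Longrightarrow> c \<le> l" unfolding c_def by (rule Least_le)
  define x where "x = take c b"
  have xcov: "x = cov (bord S)" unfolding x_def c_def Q_def cov_def bB b_def[symmetric] by simp
  have lx: "length x = c" using cB lb unfolding x_def by simp
  have xb: "covers x b" using Qc unfolding Q_def x_def by simp
  have bne: "b \<noteq> []" using lb uB u1 by auto
  have c1: "1 \<le> c"
  proof -
    obtain p0 where "p0 \<le> 0" "0 < p0 + length x" using xb bne unfolding covers_def by blast
    then show ?thesis using lx by simp
  qed
  have xS: "\<forall>i<c. x!i = S!i" unfolding x_def b_def using cB Bm by simp
  have occ_end: "occ_at x S (m - c)"
  proof -
    obtain p0 where p0: "p0 \<le> B - 1" "B - 1 < p0 + length x" "occ_at x b p0"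
      using xb bne lb unfolding covers_def by (metis diff_less length_greater_0_conv zero_less_one)
    have "p0 + c \<le> B" using p0(3) lb lx unfolding occ_at_nth by simp
    then have p0e: "p0 = B - c" using p0(2) lx by simp
    have "occ_at x S (m - B + p0)"
      by (rule occ_shift[OF p0(3)]) (use bS lb Bm m_def in auto)
    then show ?thesis using p0e cB Bm m_def by simp
  qed
  have occ_p: "occ_at x S p" if "c \<le> length u"
  proof -
    have "\<forall>i<length u. S!(p+i) = S!i" unfolding S p_def by (simp add: nth_append)
    then show ?thesis unfolding occ_at_nth using that xS lx mp m_def by auto
  qed
  have noper: False if "0 < d" "2*d < c" "\<forall>i. i + d < length x \<longrightarrow> x!i = x!(i+d)" for d
  proof -
    have "covers (take (length x - d) x) x" by (rule period_cover) (use that lx in auto)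
    then have "covers (take (c - d) x) b" using xb covers_trans lx by metis
    then have "Q (c - d)" unfolding Q_def x_def using cB by (simp add: min_def)
    then have "c \<le> c - d" by (rule cmin)
    then show False using that by simp
  qed
  define M where "M = max (length u) c"
  define t where "t = m - M"
  have tp: "t \<le> p" "1 \<le> t" "m - B \<le> t" unfolding t_def M_def using mp Bp' cB uB Bm m_def u1 by auto
  have occ_t: "occ_at x S t"
    using occ_p occ_end unfolding t_def M_def mp by (cases "c \<le> length u") (auto simp: max_def)
  have lP: "length P = n" using P n2 by simp
  have Ptake: "\<And>r. r \<le> n \<Longrightarrow> take r P = take r S" using P by (simp add: min_def)
  define R where "R = (\<lambda>r. r \<le> length P \<and> covers (take c P) (take r P))"
  have rc: "range_cov P c = Greatest R" unfolding range_cov_def R_def by simp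
  have Rle: "\<And>r. R r \<Longrightarrow> r \<le> Greatest R"
    by (rule Greatest_le_nat[of R _ "length P"]) (auto simp: R_def)
  have R0: "R 0" unfolding R_def covers_def by simp
  have RG: "R (Greatest R)"
    by (rule GreatestI_nat[of R 0 "length P"]) (use R0 in \<open>auto simp: R_def\<close>)
  have cn: "c < n" using cB Bp' n1 p_def by simp
  have xP: "take c P = x" using Ptake[of c] cn xS lx
    by (metis cB b_def less_or_eq_imp_le lb take_take x_def min_def)
  show ?thesis unfolding xcov[symmetric] lx rc m_def[symmetric] M_def[symmetric] t_def[symmetric]
  proof
    assume xc: "covers x S"
    have t1: "t - 1 < length S" using tp mp m_def by simp
    obtain s where s: "s \<le> t - 1" "t - 1 < s + length x" "occ_at x S s"
      using xc t1 unfolding covers_def by blast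
    define e where "e = s + c"
    show "t \<le> Greatest R"
    proof (cases "e \<le> n")
      case True
      have "covers x (take e S)" by (rule cover_prefix[OF xc s(3)]) (simp add: e_def lx)
      then have "R e" unfolding R_def using True lP xP Ptake[of e] by simp
      then have "e \<le> Greatest R" by (rule Rle)
      then show ?thesis using s lx e_def by simp
    next
      case False
      define d where "d = t - s"
      have d0: "0 < d" using s tp unfolding d_def by simp
      have n3': "2*p + length u \<le> 2*n" using n3 p_def by simp
      have "c + length u \<le> 2*M" unfolding M_def by simp
      then have "2*d < c" using False n3' s tp mp lx unfolding d_def e_def t_def
        by linarith
      moreover have "\<forall>i. i + d < length x \<longrightarrow> x!i = x!(i+d)"
      proof (intro allI impI)
        fix i assume i: "i + d < length x"
        have "S!(s + (i+d)) = x!(i+d)" using s(3) i unfolding occ_at_nth by blast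
        moreover have "S!(t + i) = x!i" using occ_t i unfolding occ_at_nth by simp
        moreover have "s + (i + d) = t + i" using s tp unfolding d_def by simp
        ultimately show "x!i = x!(i+d)" by simp
      qed
      ultimately show ?thesis using noper d0 by blast
    qed
  next
    assume tr: "t \<le> Greatest R"
    define r where "r = Greatest R"
    have rn: "r \<le> n" and rcov: "covers x (take r S)"
      using RG lP xP Ptake unfolding R_def r_def by auto
    show "covers x S" unfolding covers_def
    proof (intro allI impI)
      fix q assume q: "q < length S"
      show "\<exists>pa\<le>q. q < pa + length x \<and> occ_at x S pa"
      proof (cases "q < r")
        case True
        then have "q < length (take r S)" using rn n2 by simp
        then obtain pa where "pa \<le> q" "q < pa + length x" "occ_at x (take r S) pa"
          using rcov unfolding covers_def by blast
        then show ?thesis using occ_take by blast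
      next
        case False
        then have q1: "m - B \<le> q" using tr tp r_def by simp
        then have "q - (m - B) < length b" using q lb m_def by simp
        then obtain pa where pa: "pa \<le> q - (m-B)" "q - (m-B) < pa + length x" "occ_at x b pa"
          using xb unfolding covers_def by blast
        have "occ_at x S (m - B + pa)"
          by (rule occ_shift[OF pa(3)]) (use bS lb Bm m_def in auto)
        then show ?thesis using pa q1 by (intro exI[of _ "m - B + pa"]) auto
      qed
    qed
  qed
qed


theorem lemma15:
  fixes T w u v :: "'a list" and i j k :: nat
  assumes "1 \<le> j" "j \<le> length T" "1 \<le> i" "i \<le> j + 1"
    and "length (take (i - 1) T) \<ge> length (drop j T)"
    and "2 * length w \<le> length (take (i - 1) T)"
    and "periodic (take (i - 1) T @ w @ drop j T)"
    and "k \<ge> 2"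
    and "take (i - 1) T @ w @ drop j T = concat (replicate k (u @ v)) @ u"
    and "length (u @ v) = per (take (i - 1) T @ w @ drop j T)"
    and "length (u @ v @ u) > length (take (i - 1) T @ w)"
  shows "covers (cov (bord (u @ v @ u))) (u @ v @ u) \<longleftrightarrow>
    range_cov (take (i - 1) T @ w) (length (cov (bord (u @ v @ u))))
      \<ge> length (u @ v @ u) - max (length u) (length (cov (bord (u @ v @ u))))"
proof -
  define L where "L = take (i - 1) T"
  define R where "R = drop j T"
  define Tp where "Tp = L @ w @ R"
  define P where "P = L @ w"
  define S where "S = u @ v @ u"
  define p where "p = length (u @ v)"
  define m where "m = length S"
  define n where "n = length P"
  have mp: "m = p + length u" unfolding m_def S_def p_def by simp
  have Tne: "Tp \<noteq> []" using assms(7) unfolding Tp_def L_def R_def periodic_def by simp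
  have pp: "p = per Tp" using assms(10) unfolding p_def Tp_def L_def R_def by simp
  have ipT: "is_period (length Tp) Tp" using Tne unfolding is_period_def by simp
  have isp: "is_period p Tp" unfolding pp per_def by (rule LeastI[of _ "length Tp"]) (rule ipT)
  have pmin: "\<And>q. is_period q Tp \<Longrightarrow> p \<le> q" unfolding pp per_def by (rule Least_le)
  have Teq: "Tp = concat (replicate k (u @ v)) @ u" using assms(9) unfolding Tp_def L_def R_def by simp
  obtain k' where k': "k = Suc (Suc k')" using assms(8) by (metis add_2_eq_Suc le_Suc_ex)
  have Teq2: "Tp = (u @ v) @ (u @ v) @ concat (replicate k' (u @ v)) @ u" using Teq k' by simp
  have lT: "length Tp = k * p + length u" using Teq unfolding p_def by (simp add: length_concat sum_list_replicate)
  have STp: "take m Tp = S" unfolding Teq2 mp p_def S_def by simp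
  have lTR: "length Tp = n + length R" unfolding Tp_def n_def P_def by simp
  have RL: "length R \<le> length L" using assms(5) unfolding R_def L_def by simp
  have nL: "length L \<le> n" unfolding n_def P_def by simp
  have n2: "n < m" using assms(11) unfolding n_def m_def P_def S_def L_def by simp
  have kp: "2 * p \<le> k * p" using assms(8) by simp
  have n3: "2 * p + length u \<le> 2 * n" using lT lTR RL nL kp by linarith
  have n1: "p < n" using n2 n3 mp by linarith
  have PT: "P = take n Tp" unfolding Tp_def P_def n_def by simp
  have PS: "P = take n S" using PT STp n2 by (metis min.strict_order_iff take_take)
  have Sne: "S \<noteq> []" using n2 m_def by auto
  have Bp: "length (bord S) \<le> p"
  proof -
    obtain B where bB: "bord S = take B S" and Bb: "is_border (take B S) S" and Bm: "B < length S"
      using bord_props[OF Sne] by blast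
    have "B \<le> p"
    proof (rule ccontr)
      assume "\<not> B \<le> p"
      define q where "q = m - B"
      have q0: "0 < q" "q < length u" using Bm \<open>\<not> B \<le> p\<close> mp unfolding q_def m_def by auto
      have mT: "m \<le> length Tp" using lT kp mp by linarith
      have Sn: "\<And>i. i < m \<Longrightarrow> Tp!i = S!i" using STp by (metis nth_take)
      have Sq: "\<forall>i. i + q < m \<longrightarrow> Tp!i = Tp!(i+q)"
      proof (intro allI impI)
        fix i assume "i + q < m"
        then have "i < B" unfolding q_def using Bm m_def by simp
        then have "S!i = S!(i + q)" using border_nth[OF Bb] unfolding q_def m_def by simp
        then show "Tp!i = Tp!(i+q)" using Sn \<open>i + q < m\<close> by simp
      qed
      have Tper: "\<forall>i. i + p < length Tp \<longrightarrow> Tp!i = Tp!(i+p)" using isp unfolding is_period_def by blast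
      have p0: "0 < p" using isp unfolding is_period_def by simp
      have "\<forall>i. i + q < length Tp \<longrightarrow> Tp!i = Tp!(i+q)"
        using per_ext[OF Tper p0 q0(1) _ mT Sq] q0 mp by simp
      then have "is_period q Tp" unfolding is_period_def using q0 mT mp by simp
      then have "p \<le> q" by (rule pmin)
      then show False using q0 mp p_def by simp
    qed
    then show ?thesis using bB Bm by simp
  qed
  have main: "covers (cov (bord S)) S \<longleftrightarrow>
     range_cov P (length (cov (bord S))) \<ge> length S - max (length u) (length (cov (bord S)))"
    by (rule core[OF S_def Bp[unfolded p_def] PS n1[unfolded p_def] n2[unfolded m_def] n3[unfolded p_def]])
  then show ?thesis unfolding S_def P_def L_def by simp
qed

end
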